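(* Let $S, U, M \ge 1$ be integers and let $\mu_Q \in \mathbb{R}_{+}^{S \times U}$ with rows $\mu_{q^{(1)}}, \dots, \mu_{q^{(S)}} \in \mathbb{R}_+^{U}$. Let $\mathbb{N} = \{0,1,2,\dots\}$. Say that a subset $\mathcal{M} \subseteq \{1,\dots,S\}$ \emph{suffices for exact matching} if for every agent distribution $X \in \mathbb{N}^{M \times S}$ there exists $\hat X \in \mathbb{N}^{M \times S}$ whose columns indexed by $s \notin \mathcal{M}$ are identically zero and such that $\hat X \mu_Q = X \mu_Q$. Then $\mathcal{M}$ suffices for exact matching if and only if for every $\tilde s \in \{1,\dots,S\} \setminus \mathcal{M}$ there exist nonnegative integers $\alpha_{s\tilde s} \in \mathbb{N}$, $s \in \mathcal{M}$, with $$\sum_{s \in \mathcal{M}} \alpha_{s\tilde s}\, \mu_{q^{(s)}} = \mu_{q^{(\tilde s)}}.$$ Consequently, the minspecies cardinality for exact matching, $\mathcal{D}_{\mathcal{G}_1}(\mu_Q)$ (the minimum cardinality of a subset $\mathcal{M}$ that suffices for exact matching), equals $$\min\Big\{ |\mathcal{M}_1| : \mathcal{M}_1 \subseteq \{1,\dots,S\},\ \forall \tilde s \notin \mathcal{M}_1\ \exists (\alpha_{s\tilde s})_{s\in\mathcal{M}_1} \in \mathbb{N}^{\mathcal{M}_1} \text{ with } \textstyle\sum_{s \in \mathcal{M}_1} \alpha_{s\tilde s}\, \mu_{q^{(s)}} = \mu_{q^{(\tilde s)}} \Big\}.$$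
   Context: A heterogeneous team consists of $S$ species; $\mu_Q$ is the expected species-trait matrix whose $(s,u)$ entry is the expected value of trait $u$ for an agent of species $s$. There are $M$ tasks; an agent distribution is a matrix $X \in \mathbb{N}^{M\times S}$ whose $(i,s)$ entry is the number of agents of species $s$ assigned to task $i$, and the resulting expected task-trait distribution is $X\mu_Q \in \mathbb{R}_+^{M\times U}$. The exact-matching goal for a desired trait distribution $Y^*$ requires $X\mu_Q = Y^*$. The number of available agents per species is not bounded in this statement. *)

theory Defs
  imports Complex_Main
begin

text \<open>Species are indexed 0..<S, traits 0..<U, tasks 0..<M.
  The expected species-trait matrix is mu :: nat => nat => real (entry mu s u),
  an agent distribution is X :: nat => nat => nat (entry X i s).\<close>

definition task_trait :: "nat \<Rightarrow> (nat \<Rightarrow> nat \<Rightarrow> nat) \<Rightarrow> (nat \<Rightarrow> nat \<Rightarrow> real) \<Rightarrow> nat \<Rightarrow> nat \<Rightarrow> real" where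
  "task_trait S X mu i u = (\<Sum>s<S. real (X i s) * mu s u)"

definition suffices_exact ::
  "nat \<Rightarrow> nat \<Rightarrow> nat \<Rightarrow> (nat \<Rightarrow> nat \<Rightarrow> real) \<Rightarrow> nat set \<Rightarrow> bool" where
  "suffices_exact S U M mu Ms \<longleftrightarrow>
     (\<forall>X :: nat \<Rightarrow> nat \<Rightarrow> nat. \<exists>Xh :: nat \<Rightarrow> nat \<Rightarrow> nat.
        (\<forall>i<M. \<forall>s<S. s \<notin> Ms \<longrightarrow> Xh i s = 0) \<and>
        (\<forall>i<M. \<forall>u<U. task_trait S Xh mu i u = task_trait S X mu i u))"

definition int_comb_cond :: "nat \<Rightarrow> nat \<Rightarrow> (nat \<Rightarrow> nat \<Rightarrow> real) \<Rightarrow> nat set \<Rightarrow> bool" where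
  "int_comb_cond S U mu Ms \<longleftrightarrow>
     (\<forall>t\<in>{..<S} - Ms. \<exists>\<alpha> :: nat \<Rightarrow> nat.
        \<forall>u<U. (\<Sum>s\<in>Ms. real (\<alpha> s) * mu s u) = mu t u)"

definition minspecies_exact :: "nat \<Rightarrow> nat \<Rightarrow> nat \<Rightarrow> (nat \<Rightarrow> nat \<Rightarrow> real) \<Rightarrow> nat" where
  "minspecies_exact S U M mu = Min {card Ms | Ms. Ms \<subseteq> {..<S} \<and> suffices_exact S U M mu Ms}"

end

theory Submission
  imports Defs
begin

lemma fwd:
  assumes M: "M \<ge> 1" and sub: "Ms \<subseteq> {..<S}" and se: "suffices_exact S U M mu Ms"
  shows "int_comb_cond S U mu Ms"
  unfolding int_comb_cond_def
proof
  fix t assume t: "t \<in> {..<S} - Ms"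
  define X where "X = (\<lambda>(i::nat) s. if s = t then (1::nat) else 0)"
  obtain Xh where z: "\<forall>i<M. \<forall>s<S. s \<notin> Ms \<longrightarrow> Xh i s = 0"
    and e: "\<forall>i<M. \<forall>u<U. task_trait S Xh mu i u = task_trait S X mu i u"
    using se unfolding suffices_exact_def by blast
  show "\<exists>\<alpha>. \<forall>u<U. (\<Sum>s\<in>Ms. real (\<alpha> s) * mu s u) = mu t u"
  proof (intro exI allI impI)
    fix u assume u: "u < U"
    have 0: "0 < M" using M by simp
    have "task_trait S X mu 0 u = mu t u"
    proof -
      have "task_trait S X mu 0 u = (\<Sum>s<S. if s = t then mu s u else 0)"
        unfolding task_trait_def X_def by (rule sum.cong) auto
      also have "\<dots> = mu t u" using t by (simp add: sum.delta)
      finally show ?thesis .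
    qed
    moreover have "task_trait S Xh mu 0 u = (\<Sum>s\<in>Ms. real (Xh 0 s) * mu s u)"
      unfolding task_trait_def
      apply (rule sum.mono_neutral_right)
      using sub z 0 by auto
    ultimately show "(\<Sum>s\<in>Ms. real (Xh 0 s) * mu s u) = mu t u"
      using e 0 u by metis
  qed
qed

lemma bwd:
  assumes sub: "Ms \<subseteq> {..<S}" and ic: "int_comb_cond S U mu Ms"
  shows "suffices_exact S U M mu Ms"
  unfolding suffices_exact_def
proof
  fix X :: "nat \<Rightarrow> nat \<Rightarrow> nat"
  define T where "T = {..<S} - Ms"
  define A where "A t = (SOME \<alpha>. \<forall>u<U. (\<Sum>s\<in>Ms. real (\<alpha> s) * mu s u) = mu t u)" for t
  have A: "\<And>t u. t \<in> T \<Longrightarrow> u < U \<Longrightarrow> (\<Sum>s\<in>Ms. real (A t s) * mu s u) = mu t u"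
  proof -
    fix t u assume "t \<in> T" "u < U"
    then have "\<exists>\<alpha>. \<forall>u<U. (\<Sum>s\<in>Ms. real (\<alpha> s) * mu s u) = mu t u"
      using ic unfolding int_comb_cond_def T_def by blast
    then have "\<forall>u<U. (\<Sum>s\<in>Ms. real (A t s) * mu s u) = mu t u"
      unfolding A_def by (rule someI_ex)
    then show "(\<Sum>s\<in>Ms. real (A t s) * mu s u) = mu t u" using \<open>u<U\<close> by blast
  qed
  define Xh where "Xh i s = (if s \<in> Ms then X i s + (\<Sum>t\<in>T. X i t * A t s) else 0)" for i s
  have fM: "finite Ms" using sub finite_subset by blast
  have fT: "finite T" unfolding T_def by simp
  show "\<exists>Xh. (\<forall>i<M. \<forall>s<S. s \<notin> Ms \<longrightarrow> Xh i s = 0) \<and>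
        (\<forall>i<M. \<forall>u<U. task_trait S Xh mu i u = task_trait S X mu i u)"
  proof (intro exI conjI allI impI)
    fix i s assume "s \<notin> Ms" then show "Xh i s = 0" unfolding Xh_def by simp
  next
    fix i u assume u: "u < U"
    have split: "{..<S} = Ms \<union> T" "Ms \<inter> T = {}" using sub unfolding T_def by auto
    have "task_trait S Xh mu i u = (\<Sum>s\<in>Ms. real (Xh i s) * mu s u)"
    proof -
      have "(\<Sum>s\<in>T. real (Xh i s) * mu s u) = 0"
        using split(2) by (intro sum.neutral) (auto simp: Xh_def)
      then show ?thesis
        unfolding task_trait_def split(1) using sum.union_disjoint[OF fM fT split(2), of "\<lambda>s. real (Xh i s) * mu s u"] by simp
    qed
    also have "\<dots> = (\<Sum>s\<in>Ms. real (X i s) * mu s u)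
        + (\<Sum>s\<in>Ms. \<Sum>t\<in>T. real (X i t) * (real (A t s) * mu s u))"
      unfolding Xh_def by (simp add: sum.distrib algebra_simps sum_distrib_left sum_distrib_right)
    also have "(\<Sum>s\<in>Ms. \<Sum>t\<in>T. real (X i t) * (real (A t s) * mu s u))
        = (\<Sum>t\<in>T. real (X i t) * (\<Sum>s\<in>Ms. real (A t s) * mu s u))"
      by (simp add: sum.swap[of _ Ms] sum_distrib_left)
    also have "\<dots> = (\<Sum>t\<in>T. real (X i t) * mu t u)"
      using A u by simp
    also have "(\<Sum>s\<in>Ms. real (X i s) * mu s u) + (\<Sum>t\<in>T. real (X i t) * mu t u)
        = task_trait S X mu i u"
      unfolding task_trait_def split(1) using sum.union_disjoint[OF fM fT split(2), of "\<lambda>s. real (X i s) * mu s u"] by simp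
    finally show "task_trait S Xh mu i u = task_trait S X mu i u" .
  qed
qed

theorem proposition1:
  fixes S U M :: nat and mu :: "nat \<Rightarrow> nat \<Rightarrow> real"
  assumes "S \<ge> 1" and "U \<ge> 1" and "M \<ge> 1"
    and "\<forall>s<S. \<forall>u<U. mu s u \<ge> 0"
  shows "(\<forall>Ms. Ms \<subseteq> {..<S} \<longrightarrow>
            (suffices_exact S U M mu Ms \<longleftrightarrow> int_comb_cond S U mu Ms))
     \<and> minspecies_exact S U M mu
         = Min {card Ms | Ms. Ms \<subseteq> {..<S} \<and> int_comb_cond S U mu Ms}"
proof -
  have eq: "\<forall>Ms. Ms \<subseteq> {..<S} \<longrightarrow>
            (suffices_exact S U M mu Ms \<longleftrightarrow> int_comb_cond S U mu Ms)"
    using fwd[OF assms(3)] bwd by blast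
  then have "{card Ms | Ms. Ms \<subseteq> {..<S} \<and> suffices_exact S U M mu Ms}
     = {card Ms | Ms. Ms \<subseteq> {..<S} \<and> int_comb_cond S U mu Ms}" by blast
  then show ?thesis using eq unfolding minspecies_exact_def by simp
qed

end
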